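(* Let $T=\begin{pmatrix}1&1\\0&1\end{pmatrix}\in\mathsf{SL}(2,\mathbb{Z})$. For every integer $k\ge1$, $T^{12k}=\begin{pmatrix}1&12k\\0&1\end{pmatrix}$ can be written as a product of $k+1$ commutators of elements of $\mathsf{SL}(2,\mathbb{Z})$.
   Context: $[X,Y]=XYX^{-1}Y^{-1}$. *)

theory Defs
  imports "HOL-Analysis.Analysis"
begin

type_synonym mat2 = "int^2^2"

definition SL2Z :: "mat2 set" where
  "SL2Z = {A. det A = 1}"

definition mat2_of :: "int \<Rightarrow> int \<Rightarrow> int \<Rightarrow> int \<Rightarrow> mat2" where
  "mat2_of a b c d = (\<chi> i j. if i = 1 then (if j = 1 then a else b)
                              else (if j = 1 then c else d))"

definition Tmat :: mat2 where
  "Tmat = mat2_of 1 1 0 1"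

definition matpow :: "mat2 \<Rightarrow> nat \<Rightarrow> mat2" where
  "matpow A n = (((**) A) ^^ n) (mat 1)"

definition commutator :: "mat2 \<Rightarrow> mat2 \<Rightarrow> mat2" where
  "commutator X Y = X ** Y ** matrix_inv X ** matrix_inv Y"

definition mprod :: "mat2 list \<Rightarrow> mat2" where
  "mprod xs = foldr (**) xs (mat 1)"

end

theory Submission
  imports Defs
begin

lemma mat2_of_nth[simp]:
  "mat2_of a b c d $ 1 $ 1 = a" "mat2_of a b c d $ 1 $ 2 = b"
  "mat2_of a b c d $ 2 $ 1 = c" "mat2_of a b c d $ 2 $ 2 = d"
  by (simp_all add: mat2_of_def)

lemma mat2_eta: "A = mat2_of (A$1$1) (A$1$2) (A$2$1) (A$2$2)"
  unfolding mat2_of_def vec_eq_iff forall_2 by simp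

lemma mat2_cases: obtains a b c d where "A = mat2_of a b c d"
  using mat2_eta by blast

lemma mat2_of_eq_iff: "mat2_of a b c d = mat2_of a' b' c' d' \<longleftrightarrow> a = a' \<and> b = b' \<and> c = c' \<and> d = d'"
  by (metis mat2_of_nth)

lemma mat2_mult: "mat2_of a b c d ** mat2_of e f g h =
   mat2_of (a*e+b*g) (a*f+b*h) (c*e+d*g) (c*f+d*h)"
  unfolding matrix_matrix_mult_def vec_eq_iff forall_2
  by (simp add: sum_2 mat2_of_def)

lemma mat2_one: "mat 1 = mat2_of 1 0 0 1"
  unfolding mat_def vec_eq_iff forall_2 by (simp add: mat2_of_def)

lemma mat2_det: "det (mat2_of a b c d) = a*d - b*c"
  by (simp add: det_2)

definition adj :: "mat2 \<Rightarrow> mat2" where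
  "adj A = mat2_of (A$2$2) (-(A$1$2)) (-(A$2$1)) (A$1$1)"

lemma adj_of: "adj (mat2_of a b c d) = mat2_of d (-b) (-c) a"
  by (simp add: adj_def)

lemma adj_mult: "adj (A ** B) = adj B ** adj A"
proof -
  obtain a b c d where A: "A = mat2_of a b c d" by (rule mat2_cases)
  obtain e f g h where B: "B = mat2_of e f g h" by (rule mat2_cases)
  show ?thesis unfolding A B mat2_mult adj_of mat2_of_eq_iff by (simp add: algebra_simps)
qed

lemma det_adj: "det (adj A) = det A"
proof -
  obtain a b c d where A: "A = mat2_of a b c d" by (rule mat2_cases)
  show ?thesis unfolding A adj_of mat2_det by (simp add: algebra_simps)
qed

lemma adj_right: "det A = 1 \<Longrightarrow> A ** adj A = mat 1"
proof -
  assume h: "det A = 1"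
  obtain a b c d where A: "A = mat2_of a b c d" by (rule mat2_cases)
  show ?thesis using h unfolding A adj_of mat2_det mat2_mult mat2_one mat2_of_eq_iff
    by (simp add: algebra_simps)
qed

lemma adj_left: "det A = 1 \<Longrightarrow> adj A ** A = mat 1"
proof -
  assume h: "det A = 1"
  obtain a b c d where A: "A = mat2_of a b c d" by (rule mat2_cases)
  have e: "a*d - b*c = 1" using h unfolding A mat2_det .
  show ?thesis unfolding A adj_of mat2_mult mat2_one mat2_of_eq_iff
    using e by (simp add: mult.commute)
qed

lemma matrix_inv_adj: assumes "det A = 1" shows "matrix_inv A = adj A"
proof -
  have ex: "A ** adj A = mat 1 \<and> adj A ** A = mat 1" using assms adj_right adj_left by blast
  have uniq: "B = adj A" if "A ** B = mat 1 \<and> B ** A = mat 1" for B :: mat2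
  proof -
    have "B = mat 1 ** B" by (rule matrix_mul_lid[symmetric])
    also have "\<dots> = (adj A ** A) ** B" using ex by metis
    also have "\<dots> = adj A ** (A ** B)" by (rule matrix_mul_assoc[symmetric])
    also have "\<dots> = adj A ** mat 1" using that by metis
    also have "\<dots> = adj A" by (rule matrix_mul_rid)
    finally show ?thesis .
  qed
  show ?thesis unfolding matrix_inv_def
    by (rule some_equality) (rule ex, rule uniq)
qed

lemma adj_adj: "adj (adj A) = A"
  by (simp add: adj_def) (metis mat2_eta)

lemma adj_one: "adj (mat 1) = mat 1"
  by (simp add: mat2_one adj_of)

lemma matpow_Suc: "matpow A (Suc n) = A ** matpow A n"
  by (simp add: matpow_def)

lemma matpow_0: "matpow A 0 = mat 1"
  by (simp add: matpow_def)

lemma matpow_add: "matpow A (m + n) = matpow A m ** matpow A n"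
  by (induction m) (simp_all add: matpow_Suc matpow_0 matrix_mul_lid matrix_mul_assoc)

lemma det_matpow: "det A = 1 \<Longrightarrow> det (matpow A n) = 1"
  by (induction n) (simp_all add: matpow_Suc matpow_0 det_mul det_I)

lemma cancel1: "det A = 1 \<Longrightarrow> A ** (adj A ** B) = B"
  by (metis adj_right matrix_mul_assoc matrix_mul_lid)

lemma cancel2: "det A = 1 \<Longrightarrow> adj A ** (A ** B) = B"
  by (metis adj_left matrix_mul_assoc matrix_mul_lid)

lemma cancel3: "det A = 1 \<Longrightarrow> B ** A ** adj A = B"
  by (metis adj_right matrix_mul_assoc matrix_mul_rid)

lemma cancel4: "det A = 1 \<Longrightarrow> B ** adj A ** A = B"
  by (metis adj_left matrix_mul_assoc matrix_mul_rid)

lemma matpow_T: "matpow Tmat n = mat2_of 1 (int n) 0 1"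
  by (induction n) (simp_all add: matpow_Suc matpow_0 mat2_one Tmat_def mat2_mult add.commute)


lemma mprod_append: "mprod (xs @ ys) = mprod xs ** mprod ys"
  by (induction xs) (simp_all add: mprod_def matrix_mul_lid matrix_mul_assoc)

lemma mprod_single: "mprod [x] = x"
  by (simp add: mprod_def matrix_mul_rid)

lemma map2_map: "map2 h (map f xs) (map g xs) = map (\<lambda>i. h (f i) (g i)) xs"
  by (induction xs) simp_all

lemma det_conj: "det Q = 1 \<Longrightarrow> det X = 1 \<Longrightarrow> det (Q ** X ** adj Q) = 1"
  by (simp add: det_mul det_adj)

lemma commutator_adj: "det X = 1 \<Longrightarrow> det Y = 1 \<Longrightarrow> commutator X Y = X ** Y ** adj X ** adj Y"
  by (simp add: commutator_def matrix_inv_adj)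

lemma conj_comm:
  assumes "det Q = 1" "det X = 1" "det Y = 1"
  shows "commutator (Q ** X ** adj Q) (Q ** Y ** adj Q) = Q ** (X ** Y ** adj X ** adj Y) ** adj Q"
  using assms
  by (simp add: commutator_adj det_conj adj_mult adj_adj matrix_mul_assoc cancel3 cancel4)

definition Pm :: mat2 where "Pm = mat2_of 1 1 1 2"
definition Sm :: mat2 where "Sm = mat2_of 0 (-1) 1 0"
definition X0 :: mat2 where "X0 = mat2_of (-9) 7 (-4) 3"
definition Y0 :: mat2 where "Y0 = mat2_of (-5) 8 (-7) 11"

lemma det_Pm: "det Pm = 1" by (simp add: Pm_def mat2_det)
lemma det_Sm: "det Sm = 1" by (simp add: Sm_def mat2_det)
lemma det_X0: "det X0 = 1" by (simp add: X0_def mat2_det)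
lemma det_Y0: "det Y0 = 1" by (simp add: Y0_def mat2_det)

lemma matpow_1: "matpow A 1 = A"
  by (simp add: matpow_def matrix_mul_rid)

lemma matpow_2: "matpow A 2 = A ** A"
  by (simp add: matpow_def matrix_mul_rid numeral_2_eq_2)

lemma C0_eq: "X0 ** Y0 ** adj X0 ** adj Y0 = matpow Tmat 12 ** adj (matpow Pm 2)"
  unfolding matpow_T matpow_2 X0_def Y0_def Pm_def adj_of mat2_mult by simp

definition cj :: "nat \<Rightarrow> mat2 \<Rightarrow> mat2" where
  "cj i M = matpow Pm (2*i) ** M ** adj (matpow Pm (2*i))"

lemma prod_cj: "mprod (map (\<lambda>i. cj i (matpow Tmat 12 ** adj (matpow Pm 2))) [0..<n])
   = matpow Tmat (12*n) ** adj (matpow Pm (2*n))"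
proof (induction n)
  case 0
  then show ?case by (simp add: mprod_def matpow_0 adj_one matrix_mul_lid)
next
  case (Suc n)
  have d: "det (matpow Pm (2*n)) = 1" by (rule det_matpow[OF det_Pm])
  have e1: "matpow Tmat (12 * Suc n) = matpow Tmat (12*n) ** matpow Tmat 12"
    using matpow_add[of Tmat "12*n" 12] by (metis mult_Suc_right add.commute)
  have e2: "matpow Pm (2 * Suc n) = matpow Pm (2*n) ** matpow Pm 2"
    using matpow_add[of Pm "2*n" 2] by (metis mult_Suc_right add.commute)
  show ?case
    unfolding upt_Suc_append[OF le0] map_append mprod_append list.map mprod_single Suc.IH
    unfolding e1 e2 cj_def
    using d by (simp add: adj_mult matrix_mul_assoc cancel3 cancel4)
qed

lemma Sm_conj: "Sm ** adj Pm ** adj Sm = Pm"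
  unfolding Sm_def Pm_def adj_of mat2_mult by simp

lemma Sm_conj_pow: "Sm ** adj (matpow Pm n) ** adj Sm = matpow Pm n"
proof (induction n)
  case 0
  then show ?case using adj_right[OF det_Sm] by (simp add: matpow_0 adj_one matrix_mul_rid)
next
  case (Suc n)
  have e: "matpow Pm (Suc n) = matpow Pm n ** Pm"
    using matpow_add[of Pm n 1] by (metis Suc_eq_plus1 matpow_1)
  have "Sm ** adj (matpow Pm (Suc n)) ** adj Sm = Sm ** adj Pm ** (adj Sm ** Sm) ** adj (matpow Pm n) ** adj Sm"
    unfolding e adj_mult adj_left[OF det_Sm] by (simp add: matrix_mul_rid matrix_mul_assoc)
  also have "\<dots> = (Sm ** adj Pm ** adj Sm) ** (Sm ** adj (matpow Pm n) ** adj Sm)"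
    by (simp add: matrix_mul_assoc)
  also have "\<dots> = Pm ** matpow Pm n" unfolding Sm_conj Suc ..
  also have "\<dots> = matpow Pm (Suc n)" by (simp add: matpow_Suc)
  finally show ?case .
qed

lemma last_comm: "commutator (matpow Pm n) Sm = matpow Pm (2*n)"
proof -
  have "commutator (matpow Pm n) Sm = matpow Pm n ** (Sm ** adj (matpow Pm n) ** adj Sm)"
    by (simp add: commutator_adj det_matpow det_Pm det_Sm matrix_mul_assoc)
  also have "\<dots> = matpow Pm (n + n)" unfolding Sm_conj_pow matpow_add ..
  finally show ?thesis by (simp add: mult_2)
qed

theorem mainTheorem10:
  fixes k :: nat
  assumes "k \<ge> 1"
  shows "matpow Tmat (12 * k) = mat2_of 1 (12 * int k) 0 1 \<and>
         (\<exists>Xs Ys. length Xs = k + 1 \<and> length Ys = k + 1 \<and>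
            set Xs \<subseteq> SL2Z \<and> set Ys \<subseteq> SL2Z \<and>
            matpow Tmat (12 * k) = mprod (map2 commutator Xs Ys))"
proof
  show "matpow Tmat (12 * k) = mat2_of 1 (12 * int k) 0 1" by (simp add: matpow_T)
  define Xs where "Xs = map (\<lambda>i. cj i X0) [0..<k] @ [matpow Pm k]"
  define Ys where "Ys = map (\<lambda>i. cj i Y0) [0..<k] @ [Sm]"
  have dP: "\<And>i. det (matpow Pm i) = 1" by (rule det_matpow[OF det_Pm])
  have sX: "set Xs \<subseteq> SL2Z" unfolding Xs_def SL2Z_def cj_def
    using dP det_X0 by (auto simp: det_conj)
  have sY: "set Ys \<subseteq> SL2Z" unfolding Ys_def SL2Z_def cj_def
    using dP det_Y0 det_Sm by (auto simp: det_conj)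
  have cc: "commutator (cj i X0) (cj i Y0) = cj i (matpow Tmat 12 ** adj (matpow Pm 2))" for i
    unfolding cj_def C0_eq[symmetric] by (rule conj_comm[OF dP det_X0 det_Y0])
  have "mprod (map2 commutator Xs Ys)
      = mprod (map (\<lambda>i. cj i (matpow Tmat 12 ** adj (matpow Pm 2))) [0..<k]) ** commutator (matpow Pm k) Sm"
    unfolding Xs_def Ys_def zip_append[OF length_map[symmetric, THEN trans, OF length_map]]
    by (simp add: map2_map cc mprod_append mprod_single)
  also have "\<dots> = matpow Tmat (12*k)"
    unfolding prod_cj last_comm by (rule cancel4[OF dP])
  finally show "\<exists>Xs Ys. length Xs = k + 1 \<and> length Ys = k + 1 \<and>
            set Xs \<subseteq> SL2Z \<and> set Ys \<subseteq> SL2Z \<and>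
            matpow Tmat (12 * k) = mprod (map2 commutator Xs Ys)"
    using sX sY unfolding Xs_def Ys_def by (intro exI[of _ Xs] exI[of _ Ys]) (simp add: Xs_def Ys_def)
qed

end
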